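(* Let $G$ be a finite group and $p$ a prime dividing $|G|$. If the Sylow $p$-subgroups of $G$ are abelian, then $\mathcal{B}_p(G)\subseteq\mathcal{S}_p(G)$ is a strong deformation retract. Moreover, it is an equivariant strong deformation retract of $\mathcal{S}_p(G)$.
   Context: $\mathcal{S}_p(G)$ is the poset of non-trivial $p$-subgroups of $G$ ordered by inclusion, with $G$ acting by conjugation; $\mathcal{B}_p(G)=\{P\in\mathcal{S}_p(G):P=\mathcal{O}_p(N_G(P))\}$, where $\mathcal{O}_p(H)$ is the largest normal $p$-subgroup of $H$. Finite posets are regarded as finite $T_0$ spaces whose open sets are the down-sets; strong deformation retract refers to this topology, and equivariant means the retraction and homotopy are $G$-equivariant. *)

theory Defs
  imports "HOL-Algebra.Sylow" "HOL-Algebra.Group_Action" "HOL-Analysis.Homotopy"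
begin

definition conj_act :: "('a, 'b) monoid_scheme \<Rightarrow> 'a \<Rightarrow> 'a set \<Rightarrow> 'a set" where
  "conj_act G g H = g <#\<^bsub>G\<^esub> H #>\<^bsub>G\<^esub> inv\<^bsub>G\<^esub> g"

definition p_subgroup :: "('a, 'b) monoid_scheme \<Rightarrow> nat \<Rightarrow> 'a set \<Rightarrow> bool" where
  "p_subgroup G p H \<longleftrightarrow> subgroup H G \<and> finite H \<and> (\<exists>n. card H = p ^ n)"

definition Sp :: "('a, 'b) monoid_scheme \<Rightarrow> nat \<Rightarrow> 'a set set" where
  "Sp G p = {H. p_subgroup G p H \<and> H \<noteq> {\<one>\<^bsub>G\<^esub>}}"

definition sylow_subgroup :: "('a, 'b) monoid_scheme \<Rightarrow> nat \<Rightarrow> 'a set \<Rightarrow> bool" where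
  "sylow_subgroup G p P \<longleftrightarrow> subgroup P G \<and> card P = p ^ multiplicity p (order G)"

definition Op :: "('a, 'b) monoid_scheme \<Rightarrow> nat \<Rightarrow> 'a set \<Rightarrow> 'a set" where
  "Op G p H = (THE Q. p_subgroup G p Q \<and> Q \<lhd> (G\<lparr>carrier := H\<rparr>) \<and>
      (\<forall>Q'. p_subgroup G p Q' \<and> Q' \<lhd> (G\<lparr>carrier := H\<rparr>) \<longrightarrow> Q' \<subseteq> Q))"

definition Bp :: "('a, 'b) monoid_scheme \<Rightarrow> nat \<Rightarrow> 'a set set" where
  "Bp G p = {P \<in> Sp G p. P = Op G p (normalizer G P)}"

section \<open>Finite posets as T0 spaces (open sets = down-sets), ordered by inclusion\<close>

definition is_downset :: "'a set set \<Rightarrow> 'a set set \<Rightarrow> bool" where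
  "is_downset S U \<longleftrightarrow> U \<subseteq> S \<and> (\<forall>x\<in>U. \<forall>y\<in>S. y \<subseteq> x \<longrightarrow> y \<in> U)"

lemma istopology_downset: "istopology (is_downset S)"
  unfolding istopology_def is_downset_def by blast

definition down_topology :: "'a set set \<Rightarrow> 'a set topology" where
  "down_topology S = topology (is_downset S)"

lemma openin_down_topology: "openin (down_topology S) U \<longleftrightarrow> is_downset S U"
  unfolding down_topology_def using istopology_downset topology_inverse' by metis

definition sdr_with :: "(('c \<Rightarrow> 'c) \<Rightarrow> bool) \<Rightarrow> 'c topology \<Rightarrow> 'c set \<Rightarrow> bool" where
  "sdr_with Q X A \<longleftrightarrow> A \<subseteq> topspace X \<and>
     (\<exists>r. continuous_map X (subtopology X A) r \<and> (\<forall>a\<in>A. r a = a) \<and>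
          homotopic_with (\<lambda>k. (\<forall>a\<in>A. k a = a) \<and> Q k) X X id r)"

definition strong_deformation_retract :: "'c topology \<Rightarrow> 'c set \<Rightarrow> bool" where
  "strong_deformation_retract X A \<longleftrightarrow> sdr_with (\<lambda>_. True) X A"

definition equivariant_sdr ::
    "('a, 'b) monoid_scheme \<Rightarrow> 'a set topology \<Rightarrow> 'a set set \<Rightarrow> bool" where
  "equivariant_sdr G X A \<longleftrightarrow>
     sdr_with (\<lambda>k. \<forall>g\<in>carrier G. \<forall>x\<in>topspace X. k (conj_act G g x) = conj_act G g (k x)) X A"

end

theory Submission
  imports Defs
begin


lemma topspace_down: "topspace (down_topology S) = S"
proof -
  have "openin (down_topology S) S" by (simp add: openin_down_topology is_downset_def)
  moreover have "U \<subseteq> S" if "openin (down_topology S) U" for U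
    using that by (simp add: openin_down_topology is_downset_def)
  ultimately show ?thesis unfolding topspace_def by blast
qed

lemma sdr_closure:
  fixes S A :: "'a set set" and r :: "'a set \<Rightarrow> 'a set" and Q
  assumes AS: "A \<subseteq> S" and rA: "\<And>x. x \<in> S \<Longrightarrow> r x \<in> A"
    and ext: "\<And>x. x \<in> S \<Longrightarrow> x \<subseteq> r x"
    and mono: "\<And>x y. x \<in> S \<Longrightarrow> y \<in> S \<Longrightarrow> x \<subseteq> y \<Longrightarrow> r x \<subseteq> r y"
    and fixA: "\<And>a. a \<in> A \<Longrightarrow> r a = a" and Qid: "Q id" and Qr: "Q r"
  shows "sdr_with Q (down_topology S) A"
proof -
  let ?X = "down_topology S"
  have rS: "r x \<in> S" if "x \<in> S" for x using rA[OF that] AS by blast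
  have pre: "is_downset S {x \<in> S. r x \<in> U}" if U: "is_downset S U" for U
    unfolding is_downset_def
  proof (intro conjI ballI impI)
    fix x y assume x: "x \<in> {x \<in> S. r x \<in> U}" and y: "y \<in> S" and yx: "y \<subseteq> x"
    have "r y \<subseteq> r x" using mono y x yx by blast
    thus "y \<in> {x \<in> S. r x \<in> U}" using U x y rS[OF y] unfolding is_downset_def by blast
  qed auto
  have cr: "continuous_map ?X ?X r"
    unfolding continuous_map_def topspace_down openin_down_topology
    using rS pre by auto
  have crA: "continuous_map ?X (subtopology ?X A) r"
    by (rule continuous_map_into_subtopology[OF cr]) (use rA in \<open>auto simp: topspace_down\<close>)
  define h where "h = (\<lambda>(t::real, x). if t < 1 then x else r x)"
  have op01: "openin (top_of_set {0..1::real}) {0..<1}"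
  proof -
    have "openin (top_of_set {0..1::real}) ({0..1} \<inter> {..<1})"
      by (rule openin_open_Int) simp
    moreover have "{0..1::real} \<inter> {..<1} = {0..<1}" by auto
    ultimately show ?thesis by simp
  qed
  have ts: "topspace (top_of_set {0..1::real}) = {0..1}" by simp
  have ch: "continuous_map (prod_topology (top_of_set {0..1::real}) ?X) ?X h"
    unfolding continuous_map_def topspace_prod_topology topspace_down ts
  proof (intro conjI allI impI)
    show "h \<in> {0..1::real} \<times> S \<rightarrow> S"
      using rS by (auto simp: h_def)
    fix U assume "openin ?X U"
    hence U: "is_downset S U" by (simp add: openin_down_topology)
    have eq: "{z \<in> {0..1::real} \<times> S. h z \<in> U}
       = ({0..1} \<times> {x \<in> S. r x \<in> U}) \<union> ({0..<1} \<times> U)"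
    proof (intro equalityI subsetI)
      fix z assume z: "z \<in> {z \<in> {0..1::real} \<times> S. h z \<in> U}"
      obtain t x where tx: "z = (t, x)" by (cases z)
      show "z \<in> ({0..1::real} \<times> {x \<in> S. r x \<in> U}) \<union> ({0..<1} \<times> U)"
        using z unfolding tx h_def by (auto split: if_splits)
    next
      fix z assume z: "z \<in> ({0..1::real} \<times> {x \<in> S. r x \<in> U}) \<union> ({0..<1} \<times> U)"
      obtain t x where tx: "z = (t, x)" by (cases z)
      have US: "U \<subseteq> S" using U unfolding is_downset_def by blast
      have "r x \<in> U \<Longrightarrow> x \<in> S \<Longrightarrow> x \<in> U"
        using U ext rS unfolding is_downset_def by blast
      thus "z \<in> {z \<in> {0..1::real} \<times> S. h z \<in> U}"
        using z US unfolding tx h_def by auto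
    qed
    have o1: "openin (prod_topology (top_of_set {0..1::real}) ?X) ({0..1} \<times> {x \<in> S. r x \<in> U})"
      unfolding openin_prod_Times_iff using pre[OF U]
      by (simp add: openin_down_topology)
    have o2: "openin (prod_topology (top_of_set {0..1::real}) ?X) ({0..<1} \<times> U)"
      unfolding openin_prod_Times_iff using U op01
      by (simp add: openin_down_topology)
    show "openin (prod_topology (top_of_set {0..1::real}) ?X)
        {z \<in> {0..1::real} \<times> S. h z \<in> U}"
      unfolding eq using o1 o2 by (rule openin_Un)
  qed
  have hom: "homotopic_with (\<lambda>k. (\<forall>a\<in>A. k a = a) \<and> Q k) ?X ?X id r"
    unfolding homotopic_with_def
  proof (rule exI[where x=h], intro conjI)
    show "continuous_map (prod_topology (top_of_set {0..1::real}) ?X) ?X h" by (rule ch)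
    show "\<forall>x. h (0, x) = id x" by (simp add: h_def)
    show "\<forall>x. h (1, x) = r x" by (simp add: h_def)
    show "\<forall>t\<in>{0..1}. (\<forall>a\<in>A. h (t, a) = a) \<and> Q (\<lambda>x. h (t, x))"
    proof
    fix t :: real assume "t \<in> {0..1}"
    show "(\<forall>a\<in>A. h (t, a) = a) \<and> Q (\<lambda>x. h (t, x))"
    proof (cases "t < 1")
      case True
      hence "(\<lambda>x. h (t, x)) = id" by (auto simp: h_def)
      thus ?thesis using Qid by (metis id_apply)
    next
      case False
      hence "(\<lambda>x. h (t, x)) = r" by (auto simp: h_def)
      thus ?thesis using Qr fixA by (metis)
    qed
    qed
  qed
  show ?thesis unfolding sdr_with_def topspace_down
    using AS crA fixA hom by blast
qed



lemma (in group) fixed_coset: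
  assumes fin: "finite (carrier G)" and p: "prime p"
    and Q: "subgroup Q G" and cQ: "card Q = p ^ n"
    and S: "subgroup S G" and nd: "\<not> p dvd card (rcosets S)"
  shows "\<exists>x\<in>carrier G. \<forall>q\<in>Q. x \<otimes> q \<otimes> inv x \<in> S"
proof (rule ccontr)
  assume nx: "\<not> (\<exists>x\<in>carrier G. \<forall>q\<in>Q. x \<otimes> q \<otimes> inv x \<in> S)"
  define E where "E = rcosets S"
  define \<phi> where "\<phi> = (\<lambda>g. \<lambda>X\<in>E. X #> inv g)"
  define QG where "QG = G\<lparr>carrier := Q\<rparr>"
  have grpQ: "group QG" using subgroup_imp_group Q QG_def by simp
  have Qc: "Q \<subseteq> carrier G" using Q subgroup.subset by blast
  have Sc: "S \<subseteq> carrier G" using S subgroup.subset by blast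
  have Erep: "\<exists>a\<in>carrier G. X = S #> a" if "X \<in> E" for X
    using that unfolding E_def RCOSETS_def by blast
  have EC: "X \<subseteq> carrier G" if "X \<in> E" for X
    using Erep[OF that] Sc r_coset_subset_G by blast
  have closed: "X #> g \<in> E" if XE: "X \<in> E" and gc: "g \<in> carrier G" for X g
  proof -
    obtain a where a: "a \<in> carrier G" "X = S #> a" using Erep[OF XE] by blast
    have "X #> g = S #> (a \<otimes> g)" using a gc Sc coset_mult_assoc by simp
    thus ?thesis unfolding E_def using a gc Sc by (simp add: rcosetsI)
  qed
  have bk1: "X #> g #> inv g = X" if "X \<in> E" "g \<in> carrier G" for X g
    using that EC[OF that(1)] coset_mult_assoc by simp
  have bk2: "X #> inv g #> g = X" if "X \<in> E" "g \<in> carrier G" for X g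
    using that EC[OF that(1)] coset_mult_assoc by simp
  have bij: "\<phi> g \<in> Bij E" if "g \<in> Q" for g
  proof -
    have g: "g \<in> carrier G" using that Qc by blast
    have "bij_betw (\<phi> g) E E"
    proof (rule bij_betwI[where g = "\<phi> (inv g)"])
      show "\<phi> g \<in> E \<rightarrow> E" using g closed by (simp add: \<phi>_def)
      show "\<phi> (inv g) \<in> E \<rightarrow> E" using g closed by (simp add: \<phi>_def)
      fix X assume X: "X \<in> E"
      have "X #> inv g \<in> E" "X #> g \<in> E" using X g closed by auto
      thus "\<phi> (inv g) (\<phi> g X) = X" "\<phi> g (\<phi> (inv g) X) = X"
        using X g bk1 bk2 by (simp_all add: \<phi>_def)
    qed
    thus ?thesis unfolding Bij_def \<phi>_def by auto
  qed
  have hom: "group_hom QG (BijGroup E) \<phi>"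
  proof (intro group_hom.intro group_hom_axioms.intro grpQ group_BijGroup homI)
    fix g assume "g \<in> carrier QG"
    thus "\<phi> g \<in> carrier (BijGroup E)" using bij by (simp add: QG_def BijGroup_def)
  next
    fix g h assume gh: "g \<in> carrier QG" "h \<in> carrier QG"
    hence g: "g \<in> carrier G" "g \<in> Q" and h: "h \<in> carrier G" "h \<in> Q" using Qc by (auto simp: QG_def)
    have "\<phi> (g \<otimes>\<^bsub>QG\<^esub> h) = (\<lambda>X\<in>E. X #> inv (g \<otimes> h))" by (simp add: QG_def \<phi>_def)
    also have "\<dots> = compose E (\<phi> g) (\<phi> h)"
      unfolding compose_def \<phi>_def
    proof (rule restrict_ext)
      fix X assume X: "X \<in> E"
      have "X #> inv h \<in> E" using closed X h by simp
      then show "X #> inv (g \<otimes> h) = (\<lambda>X\<in>E. X #> inv g) ((\<lambda>X\<in>E. X #> inv h) X)"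
        using X g h EC[OF X] by (simp add: coset_mult_assoc inv_mult_group)
    qed
    also have "\<dots> = \<phi> g \<otimes>\<^bsub>BijGroup E\<^esub> \<phi> h"
      using bij g h by (simp add: BijGroup_def)
    finally show "\<phi> (g \<otimes>\<^bsub>QG\<^esub> h) = \<phi> g \<otimes>\<^bsub>BijGroup E\<^esub> \<phi> h" .
  qed
  interpret A: group_action QG E \<phi> using hom by (simp add: group_action_def)
  have finE: "finite E" unfolding E_def
    using rcosets_subset_PowG[OF S] fin by (meson finite_Pow_iff finite_subset)
  have pdvd: "p dvd card Ob" if Ob: "Ob \<in> orbits QG E \<phi>" for Ob
  proof -
    obtain X where X: "X \<in> E" "Ob = orbit QG \<phi> X" using Ob unfolding orbits_def by blast
    have "card Ob * card (stabilizer QG \<phi> X) = p ^ n"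
      using A.orbit_stabilizer_theorem[OF X(1)] X(2) cQ by (simp add: QG_def order_def)
    hence "card Ob dvd p ^ n" by (metis dvd_triv_left)
    then obtain i where i: "card Ob = p ^ i" using divides_primepow_nat[OF p] by blast
    show ?thesis
    proof (cases i)
      case 0
      hence c1: "card Ob = 1" using i by simp
      have XO: "X \<in> Ob" using A.orbit_refl[OF X(1)] X(2) by simp
      have fx: "\<phi> g X = X" if "g \<in> Q" for g
      proof -
        have "\<phi> g X \<in> Ob" using that X(2) unfolding orbit_def QG_def by auto
        moreover obtain y where "Ob = {y}" using c1 card_1_singletonE by blast
        ultimately show ?thesis using XO by simp
      qed
      obtain a where a: "a \<in> carrier G" "X = S #> a" using Erep[OF X(1)] by blast
      have "\<forall>q\<in>Q. a \<otimes> q \<otimes> inv a \<in> S"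
      proof
        fix q assume q: "q \<in> Q"
        hence qc: "q \<in> carrier G" using Qc by (rule rev_subsetD)
        have "inv q \<in> Q" by (rule subgroup.m_inv_closed[OF Q q])
        hence "X #> q = X" using fx[of "inv q"] X(1) qc by (simp add: \<phi>_def)
        hence "S #> (a \<otimes> q) = S #> a" using a qc Sc coset_mult_assoc by simp
        moreover have "a \<otimes> q \<in> S #> (a \<otimes> q)" using rcos_self a qc S by simp
        ultimately obtain s where s: "s \<in> S" "a \<otimes> q = s \<otimes> a" unfolding r_coset_def by blast
        have sc: "s \<in> carrier G" using s(1) Sc by blast
        have "a \<otimes> q \<otimes> inv a = s \<otimes> a \<otimes> inv a" by (simp add: s(2))
        also have "\<dots> = s" using sc a(1) by (simp add: m_assoc)
        finally have "a \<otimes> q \<otimes> inv a = s" .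
        thus "a \<otimes> q \<otimes> inv a \<in> S" using s by simp
      qed
      thus ?thesis using nx a by blast
    next
      case (Suc k) thus ?thesis using i by simp
    qed
  qed
  have ds: "(\<Sum>Ob\<in>orbits QG E \<phi>. \<Sum>x\<in>Ob. (1::nat)) = (\<Sum>x\<in>E. 1)"
    by (rule A.disjoint_sum[OF finE])
  have "card E = (\<Sum>Ob\<in>orbits QG E \<phi>. card Ob)"
    using ds by simp
  hence "p dvd card E" using pdvd by (simp add: dvd_sum)
  thus False using nd E_def by simp
qed


definition sylF :: "('a, 'b) monoid_scheme \<Rightarrow> nat \<Rightarrow> 'a set \<Rightarrow> 'a set set" where
  "sylF G p P = {S. sylow_subgroup G p S \<and> P \<subseteq> S}"

definition rr :: "('a, 'b) monoid_scheme \<Rightarrow> nat \<Rightarrow> 'a set \<Rightarrow> 'a set" where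
  "rr G p P = \<Inter> (sylF G p P)"

locale absyl = group G for G (structure) +
  fixes p :: nat
  assumes fin: "finite (carrier G)" and pp: "prime p" and pdvd: "p dvd order G"
    and ab: "\<forall>P. sylow_subgroup G p P \<longrightarrow> (\<forall>x\<in>P. \<forall>y\<in>P. x \<otimes> y = y \<otimes> x)"
begin

lemma canc1 [simp]: "x \<in> carrier G \<Longrightarrow> y \<in> carrier G \<Longrightarrow> x \<otimes> (inv x \<otimes> y) = y"
  by (simp add: m_assoc[symmetric])
lemma canc2 [simp]: "x \<in> carrier G \<Longrightarrow> y \<in> carrier G \<Longrightarrow> inv x \<otimes> (x \<otimes> y) = y"
  by (simp add: m_assoc[symmetric])
lemma canc3 [simp]: "x \<in> carrier G \<Longrightarrow> y \<in> carrier G \<Longrightarrow> y \<otimes> x \<otimes> inv x = y"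
  by (simp add: m_assoc)
lemma canc4 [simp]: "x \<in> carrier G \<Longrightarrow> y \<in> carrier G \<Longrightarrow> y \<otimes> inv x \<otimes> x = y"
  by (simp add: m_assoc)

abbreviation "m \<equiv> multiplicity p (order G)"

lemma order_pos: "order G \<noteq> 0"
  using fin order_gt_0_iff_finite by auto

lemma mult_le: "p ^ k dvd order G \<Longrightarrow> k \<le> m"
  using order_pos pp by (intro multiplicity_geI) auto

lemma not_dvd_suc: "\<not> p ^ Suc m dvd order G"
  using mult_le by fastforce

lemma conj_img: "conj_act G g H = (\<lambda>h. g \<otimes> h \<otimes> inv g) ` H"
  unfolding conj_act_def l_coset_def r_coset_def by auto

lemma conj_inj: "g \<in> carrier G \<Longrightarrow> inj_on (\<lambda>h. g \<otimes> h \<otimes> inv g) (carrier G)"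
  by (rule inj_onI) simp

lemma conj_subgroup: "g \<in> carrier G \<Longrightarrow> subgroup H G \<Longrightarrow> subgroup (conj_act G g H) G"
  unfolding conj_act_def by (rule subgroup_conjugation_is_surj2)

lemma conj_card:
  assumes g: "g \<in> carrier G" and H: "H \<subseteq> carrier G" shows "card (conj_act G g H) = card H"
  unfolding conj_img by (rule card_image[OF inj_on_subset[OF conj_inj[OF g] H]])

lemma conj_sub_carrier: "g \<in> carrier G \<Longrightarrow> H \<subseteq> carrier G \<Longrightarrow> conj_act G g H \<subseteq> carrier G"
  unfolding conj_img by auto

lemma conj_conj: "g \<in> carrier G \<Longrightarrow> H \<subseteq> carrier G \<Longrightarrow> conj_act G g (conj_act G (inv g) H) = H"
  unfolding conj_img image_image
proof -
  assume g: "g \<in> carrier G" and H: "H \<subseteq> carrier G"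
  have "g \<otimes> (inv g \<otimes> h \<otimes> inv (inv g)) \<otimes> inv g = h" if "h \<in> H" for h
  proof -
    have hc: "h \<in> carrier G" using that H by blast
    show ?thesis using hc g by (simp add: m_assoc[symmetric])
  qed
  thus "(\<lambda>x. g \<otimes> (inv g \<otimes> x \<otimes> inv (inv g)) \<otimes> inv g) ` H = H" by simp
qed

lemma conj_conj': "g \<in> carrier G \<Longrightarrow> H \<subseteq> carrier G \<Longrightarrow> conj_act G (inv g) (conj_act G g H) = H"
  using conj_conj[of "inv g" H] by simp

lemma conj_mono: "H \<subseteq> K \<Longrightarrow> conj_act G g H \<subseteq> conj_act G g K"
  unfolding conj_img by auto

lemma conj_sylow: "g \<in> carrier G \<Longrightarrow> sylow_subgroup G p S \<Longrightarrow> sylow_subgroup G p (conj_act G g S)"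
  unfolding sylow_subgroup_def using conj_subgroup conj_card subgroup.subset by metis

lemma sylow_card: "sylow_subgroup G p S \<Longrightarrow> card S = p ^ m"
  by (simp add: sylow_subgroup_def)

lemma ppow_sub:
  assumes H: "subgroup H G" and K: "subgroup K G" and HK: "H \<subseteq> K" and cK: "card K = p ^ a"
  shows "\<exists>n. card H = p ^ n"
proof -
  interpret KG: group "G\<lparr>carrier := K\<rparr>" using subgroup_imp_group[OF K] .
  have "subgroup H (G\<lparr>carrier := K\<rparr>)" using subgroup_incl[OF H K HK] .
  from KG.lagrange[OF this] have "card H dvd card K"
    by (metis dvd_triv_right order_def partial_object.select_convs(1) partial_object.surjective partial_object.update_convs(1))
  thus ?thesis using cK divides_primepow_nat[OF pp] by auto
qed

lemma sylow2:
  assumes P: "p_subgroup G p P"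
  shows "\<exists>S. sylow_subgroup G p S \<and> P \<subseteq> S"
proof -
  have "p ^ m dvd order G" by (rule multiplicity_dvd)
  then obtain c where c: "order G = p ^ m * c" by blast
  obtain S0 where S0: "subgroup S0 G" "card S0 = p ^ m"
    using sylow_thm[OF pp is_group c fin] by blast
  have nd: "\<not> p dvd card (rcosets S0)"
  proof
    assume "p dvd card (rcosets S0)"
    then obtain k where "card (rcosets S0) = p * k" by blast
    hence "order G = p ^ Suc m * k" using lagrange[OF S0(1)] S0(2) by (simp add: ac_simps)
    thus False using not_dvd_suc by (metis dvd_triv_left)
  qed
  obtain n where n: "card P = p ^ n" using P unfolding p_subgroup_def by blast
  have Ps: "subgroup P G" using P unfolding p_subgroup_def by blast
  obtain x where x: "x \<in> carrier G" "\<forall>q\<in>P. x \<otimes> q \<otimes> inv x \<in> S0"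
    using fixed_coset[OF fin pp Ps n S0(1) nd] by blast
  have S0c: "S0 \<subseteq> carrier G" using S0(1) subgroup.subset by blast
  define S where "S = conj_act G (inv x) S0"
  have "sylow_subgroup G p S" unfolding S_def sylow_subgroup_def
    using conj_subgroup[OF _ S0(1)] conj_card[OF _ S0c] x(1) S0(2) by simp
  moreover have "P \<subseteq> S"
  proof
    fix q assume q: "q \<in> P"
    hence qc: "q \<in> carrier G" using Ps subgroup.subset by blast
    have "inv x \<otimes> (x \<otimes> q \<otimes> inv x) \<otimes> inv (inv x) = q"
      using x(1) qc by (simp add: m_assoc)
    thus "q \<in> S" unfolding S_def conj_img using x(2) q by (metis image_eqI)
  qed
  ultimately show ?thesis by blast
qed


lemma Sp_sub: "P \<in> Sp G p \<Longrightarrow> subgroup P G"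
  by (simp add: Sp_def p_subgroup_def)

lemma Sp_c: "P \<in> Sp G p \<Longrightarrow> P \<subseteq> carrier G"
  using Sp_sub subgroup.subset by blast

lemma sylF_ne: "P \<in> Sp G p \<Longrightarrow> sylF G p P \<noteq> {}"
  using sylow2[of P] by (auto simp: Sp_def sylF_def)

lemma sylF_c: "S \<in> sylF G p P \<Longrightarrow> S \<subseteq> carrier G"
  by (auto simp: sylF_def sylow_subgroup_def dest: subgroup.subset)

lemma sylF_conj:
  assumes g: "g \<in> carrier G" and Pc: "P \<subseteq> carrier G"
  shows "sylF G p (conj_act G g P) = (conj_act G g) ` sylF G p P"
proof (intro equalityI subsetI)
  fix T assume "T \<in> sylF G p (conj_act G g P)"
  hence T: "sylow_subgroup G p T" "conj_act G g P \<subseteq> T" by (auto simp: sylF_def)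
  have Tc: "T \<subseteq> carrier G" using T(1) by (auto simp: sylow_subgroup_def dest: subgroup.subset)
  define S where "S = conj_act G (inv g) T"
  have "sylow_subgroup G p S" unfolding S_def using conj_sylow[OF _ T(1)] g by simp
  moreover have "P \<subseteq> S"
    using conj_mono[OF T(2), of "inv g"] conj_conj'[OF g Pc] unfolding S_def by simp
  moreover have "T = conj_act G g S" unfolding S_def using conj_conj[OF g Tc] by simp
  ultimately show "T \<in> (conj_act G g) ` sylF G p P" by (auto simp: sylF_def)
next
  fix T assume "T \<in> (conj_act G g) ` sylF G p P"
  then obtain S where S: "sylow_subgroup G p S" "P \<subseteq> S" "T = conj_act G g S"
    by (auto simp: sylF_def)
  show "T \<in> sylF G p (conj_act G g P)"
    using conj_sylow[OF g S(1)] conj_mono[OF S(2)] S(3) by (auto simp: sylF_def)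
qed

lemma rr_conj:
  assumes g: "g \<in> carrier G" and P: "P \<in> Sp G p"
  shows "rr G p (conj_act G g P) = conj_act G g (rr G p P)"
proof -
  have Pc: "P \<subseteq> carrier G" using Sp_c[OF P] .
  obtain j where j: "j \<in> sylF G p P" using sylF_ne[OF P] by blast
  have "rr G p (conj_act G g P) = (\<Inter>S\<in>sylF G p P. conj_act G g S)"
    unfolding rr_def sylF_conj[OF g Pc] by simp
  also have "\<dots> = (\<Inter>S\<in>sylF G p P. (\<lambda>h. g \<otimes> h \<otimes> inv g) ` S)"
    unfolding conj_img ..
  also have "\<dots> = (\<lambda>h. g \<otimes> h \<otimes> inv g) ` (\<Inter>S\<in>sylF G p P. S)"
    using image_INT[OF conj_inj[OF g], of "sylF G p P" "\<lambda>S. S" j] sylF_c j by auto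
  also have "\<dots> = conj_act G g (rr G p P)" unfolding rr_def conj_img by simp
  finally show ?thesis .
qed

lemma normalizer_iff:
  "H \<subseteq> carrier G \<Longrightarrow> x \<in> normalizer G H \<longleftrightarrow> x \<in> carrier G \<and> conj_act G x H = H"
  by (simp add: normalizer_def stabilizer_def conj_act_def)

lemma rr_sub: "P \<in> Sp G p \<Longrightarrow> subgroup (rr G p P) G"
  unfolding rr_def using sylF_ne
  by (intro subgroups_Inter) (auto simp: sylF_def sylow_subgroup_def)

lemma rr_ge: "P \<subseteq> rr G p P"
  unfolding rr_def sylF_def by blast

lemma rr_le: "S \<in> sylF G p P \<Longrightarrow> rr G p P \<subseteq> S"
  unfolding rr_def by blast

lemma rr_p: assumes P: "P \<in> Sp G p" shows "p_subgroup G p (rr G p P)"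
proof -
  obtain S where S: "S \<in> sylF G p P" using sylF_ne[OF P] by blast
  have Ss: "subgroup S G" "card S = p ^ m" using S by (auto simp: sylF_def sylow_subgroup_def)
  have "\<exists>n. card (rr G p P) = p ^ n"
    using ppow_sub[OF rr_sub[OF P] Ss(1) rr_le[OF S] Ss(2)] .
  moreover have "finite (rr G p P)"
    by (rule finite_subset[OF subset_trans[OF rr_le[OF S] sylF_c[OF S]] fin])
  ultimately show ?thesis unfolding p_subgroup_def using rr_sub[OF P] by blast
qed

lemma syl_in_norm:
  assumes S: "S \<in> sylF G p P" and Pc: "P \<subseteq> carrier G"
  shows "S \<subseteq> normalizer G P"
proof
  fix s assume s: "s \<in> S"
  have Ss: "sylow_subgroup G p S" "P \<subseteq> S" using S by (auto simp: sylF_def)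
  have sc: "s \<in> carrier G" using s sylF_c[OF S] by blast
  have "(\<lambda>h. s \<otimes> h \<otimes> inv s) ` P = (\<lambda>h. h) ` P"
  proof (rule image_cong[OF refl])
    fix h assume h: "h \<in> P"
    have hc: "h \<in> carrier G" using h Pc by blast
    have "s \<otimes> h = h \<otimes> s" using ab Ss s h by blast
    thus "s \<otimes> h \<otimes> inv s = h" using sc hc by simp
  qed
  hence "conj_act G s P = P" unfolding conj_img by simp
  thus "s \<in> normalizer G P" using normalizer_iff[OF Pc] sc by simp
qed

lemma Q_in_S:
  assumes P: "P \<in> Sp G p" and S: "S \<in> sylF G p P" and Q: "p_subgroup G p Q"
    and nQ: "Q \<lhd> G\<lparr>carrier := normalizer G P\<rparr>"
  shows "Q \<subseteq> S"
proof -
  define N where "N = normalizer G P"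
  have Pc: "P \<subseteq> carrier G" using Sp_c[OF P] .
  have NG: "subgroup N G" unfolding N_def by (rule normalizer_imp_subgroup[OF Pc])
  interpret NN: group "G\<lparr>carrier := N\<rparr>" using subgroup_imp_group[OF NG] .
  have nQ': "Q \<lhd> G\<lparr>carrier := N\<rparr>" using nQ N_def by simp
  have Ss: "sylow_subgroup G p S" using S by (auto simp: sylF_def)
  have SN: "S \<subseteq> N" unfolding N_def by (rule syl_in_norm[OF S Pc])
  have SsubN: "subgroup S (G\<lparr>carrier := N\<rparr>)"
    using subgroup_incl[OF _ NG SN] Ss by (simp add: sylow_subgroup_def)
  have QsubN: "subgroup Q (G\<lparr>carrier := N\<rparr>)" using nQ' normal_imp_subgroup by blast
  obtain n where n: "card Q = p ^ n" using Q unfolding p_subgroup_def by blast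
  have Nc: "N \<subseteq> carrier G" using NG subgroup.subset by blast
  have finN: "finite (carrier (G\<lparr>carrier := N\<rparr>))" using Nc fin finite_subset by simp
  have nd: "\<not> p dvd card (rcosets\<^bsub>G\<lparr>carrier := N\<rparr>\<^esub> S)"
  proof
    assume "p dvd card (rcosets\<^bsub>G\<lparr>carrier := N\<rparr>\<^esub> S)"
    then obtain k where k: "card (rcosets\<^bsub>G\<lparr>carrier := N\<rparr>\<^esub> S) = p * k" by blast
    have "card (rcosets\<^bsub>G\<lparr>carrier := N\<rparr>\<^esub> S) * card S = card N"
      using NN.lagrange[OF SsubN] by (simp add: order_def)
    hence cN: "card N = p ^ Suc m * k" using k sylow_card[OF Ss] by (simp add: ac_simps)
    have "card N dvd order G" using lagrange[OF NG] by (metis dvd_triv_right)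
    hence "p ^ Suc m dvd order G" using cN by (metis dvd_mult_left)
    thus False using not_dvd_suc by simp
  qed
  obtain x where x: "x \<in> carrier (G\<lparr>carrier := N\<rparr>)"
     "\<forall>q\<in>Q. x \<otimes>\<^bsub>G\<lparr>carrier := N\<rparr>\<^esub> q \<otimes>\<^bsub>G\<lparr>carrier := N\<rparr>\<^esub> inv\<^bsub>G\<lparr>carrier := N\<rparr>\<^esub> x \<in> S"
    using NN.fixed_coset[OF finN pp QsubN n SsubN nd] by blast
  have xN: "x \<in> N" using x(1) by simp
  have xc: "x \<in> carrier G" using xN Nc by blast
  have invx: "inv\<^bsub>G\<lparr>carrier := N\<rparr>\<^esub> x = inv x" using m_inv_consistent[OF NG xN] .
  show "Q \<subseteq> S"
  proof
    fix q assume q: "q \<in> Q"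
    have qc: "q \<in> carrier G" using q Q unfolding p_subgroup_def using subgroup.subset by blast
    have "inv\<^bsub>G\<lparr>carrier := N\<rparr>\<^esub> x \<otimes>\<^bsub>G\<lparr>carrier := N\<rparr>\<^esub> q \<otimes>\<^bsub>G\<lparr>carrier := N\<rparr>\<^esub> x \<in> Q"
      using normal.inv_op_closed1[OF nQ' x(1) q] .
    hence q': "inv x \<otimes> q \<otimes> x \<in> Q" using invx by simp
    have "x \<otimes> (inv x \<otimes> q \<otimes> x) \<otimes> inv x \<in> S" using x(2)[rule_format, OF q'] invx by simp
    moreover have "x \<otimes> (inv x \<otimes> q \<otimes> x) \<otimes> inv x = q" using xc qc by (simp add: m_assoc)
    ultimately show "q \<in> S" by simp
  qed
qed

lemma Op_eq:
  assumes P: "P \<in> Sp G p"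
  shows "Op G p (normalizer G P) = rr G p P"
proof -
  define N where "N = normalizer G P"
  have Pc: "P \<subseteq> carrier G" using Sp_c[OF P] .
  have NG: "subgroup N G" unfolding N_def by (rule normalizer_imp_subgroup[OF Pc])
  interpret NN: group "G\<lparr>carrier := N\<rparr>" using subgroup_imp_group[OF NG] .
  obtain S where S: "S \<in> sylF G p P" using sylF_ne[OF P] by blast
  have RN: "rr G p P \<subseteq> N" using rr_le[OF S] syl_in_norm[OF S Pc] N_def by blast
  have nR: "rr G p P \<lhd> G\<lparr>carrier := N\<rparr>"
  proof -
    have "subgroup (rr G p P) (G\<lparr>carrier := N\<rparr>)" using subgroup_incl[OF rr_sub[OF P] NG RN] .
    moreover have "\<forall>x\<in>carrier (G\<lparr>carrier := N\<rparr>). \<forall>h\<in>rr G p P.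
        x \<otimes>\<^bsub>G\<lparr>carrier := N\<rparr>\<^esub> h \<otimes>\<^bsub>G\<lparr>carrier := N\<rparr>\<^esub> inv\<^bsub>G\<lparr>carrier := N\<rparr>\<^esub> x \<in> rr G p P"
    proof (intro ballI)
      fix x h assume x: "x \<in> carrier (G\<lparr>carrier := N\<rparr>)" and h: "h \<in> rr G p P"
      have xN: "x \<in> N" using x by simp
      have xc: "x \<in> carrier G" using xN NG subgroup.subset by blast
      have cx: "conj_act G x P = P" using xN normalizer_iff[OF Pc] N_def by simp
      have "conj_act G x (rr G p P) = rr G p P" using rr_conj[OF xc P] cx by simp
      moreover have "x \<otimes> h \<otimes> inv x \<in> conj_act G x (rr G p P)" using h unfolding conj_img by blast
      ultimately show "x \<otimes>\<^bsub>G\<lparr>carrier := N\<rparr>\<^esub> h \<otimes>\<^bsub>G\<lparr>carrier := N\<rparr>\<^esub> inv\<^bsub>G\<lparr>carrier := N\<rparr>\<^esub> x \<in> rr G p P"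
        using m_inv_consistent[OF NG xN] by simp
    qed
    ultimately show ?thesis using NN.normal_inv_iff by blast
  qed
  have maxR: "\<forall>Q'. p_subgroup G p Q' \<and> Q' \<lhd> G\<lparr>carrier := N\<rparr> \<longrightarrow> Q' \<subseteq> rr G p P"
  proof (intro allI impI)
    fix Q' assume Q': "p_subgroup G p Q' \<and> Q' \<lhd> G\<lparr>carrier := N\<rparr>"
    have "Q' \<subseteq> S'" if S': "S' \<in> sylF G p P" for S'
      using Q_in_S[OF P S'] Q' N_def by blast
    thus "Q' \<subseteq> rr G p P" unfolding rr_def by blast
  qed
  show ?thesis unfolding Op_def N_def[symmetric]
  proof (rule the_equality)
    show "p_subgroup G p (rr G p P) \<and> rr G p P \<lhd> G\<lparr>carrier := N\<rparr> \<and>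
      (\<forall>Q'. p_subgroup G p Q' \<and> Q' \<lhd> G\<lparr>carrier := N\<rparr> \<longrightarrow> Q' \<subseteq> rr G p P)"
      using rr_p[OF P] nR maxR by blast
  next
    fix Q assume Q: "p_subgroup G p Q \<and> Q \<lhd> G\<lparr>carrier := N\<rparr> \<and>
      (\<forall>Q'. p_subgroup G p Q' \<and> Q' \<lhd> G\<lparr>carrier := N\<rparr> \<longrightarrow> Q' \<subseteq> Q)"
    have "Q \<subseteq> rr G p P" using maxR Q by blast
    moreover have "rr G p P \<subseteq> Q" using Q rr_p[OF P] nR by blast
    ultimately show "Q = rr G p P" by blast
  qed
qed

lemma rr_Sp: assumes P: "P \<in> Sp G p" shows "rr G p P \<in> Sp G p"
proof -
  have "P \<noteq> {\<one>}" using P by (simp add: Sp_def)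
  moreover have "\<one> \<in> P" using Sp_sub[OF P] subgroup.one_closed by blast
  ultimately obtain y where "y \<in> P" "y \<noteq> \<one>" by blast
  hence "rr G p P \<noteq> {\<one>}" using rr_ge[of P] by blast
  thus ?thesis using rr_p[OF P] by (simp add: Sp_def)
qed

lemma rr_idem: assumes P: "P \<in> Sp G p" shows "rr G p (rr G p P) = rr G p P"
proof -
  have "sylF G p (rr G p P) = sylF G p P"
  proof (intro equalityI subsetI)
    fix S assume "S \<in> sylF G p (rr G p P)"
    thus "S \<in> sylF G p P" using rr_ge[of P] unfolding sylF_def by blast
  next
    fix S assume S: "S \<in> sylF G p P"
    thus "S \<in> sylF G p (rr G p P)" using rr_le[OF S] unfolding sylF_def by blast
  qed
  thus ?thesis by (simp add: rr_def)
qed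

lemma rr_Bp: assumes P: "P \<in> Sp G p" shows "rr G p P \<in> Bp G p"
proof -
  have "Op G p (normalizer G (rr G p P)) = rr G p P"
    using Op_eq[OF rr_Sp[OF P]] rr_idem[OF P] by (rule trans)
  thus ?thesis unfolding Bp_def using rr_Sp[OF P] by simp
qed

lemma Bp_fix: assumes a: "a \<in> Bp G p" shows "rr G p a = a"
proof -
  have a1: "a \<in> Sp G p" and a2: "a = Op G p (normalizer G a)" using a by (simp_all add: Bp_def)
  have h: "Op G p (normalizer G a) = rr G p a" by (rule Op_eq[OF a1])
  show ?thesis by (rule trans[OF h[symmetric] a2[symmetric]])
qed

lemma rr_mono: "P \<subseteq> Q \<Longrightarrow> rr G p P \<subseteq> rr G p Q"
  unfolding rr_def sylF_def by blast

end


theorem proposition5p2: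
  fixes G :: "('a, 'b) monoid_scheme" and p :: nat
  assumes "group G" and "finite (carrier G)" and "prime p" and "p dvd order G"
    and "\<forall>P. sylow_subgroup G p P \<longrightarrow>
           (\<forall>x\<in>P. \<forall>y\<in>P. x \<otimes>\<^bsub>G\<^esub> y = y \<otimes>\<^bsub>G\<^esub> x)"
  shows "strong_deformation_retract (down_topology (Sp G p)) (Bp G p)
       \<and> equivariant_sdr G (down_topology (Sp G p)) (Bp G p)"
proof -
  interpret absyl G p
    using assms by (simp add: absyl_def absyl_axioms_def)
  have AS: "Bp G p \<subseteq> Sp G p" by (auto simp: Bp_def)
  have rA: "\<And>x. x \<in> Sp G p \<Longrightarrow> rr G p x \<in> Bp G p" by (rule rr_Bp)
  have ext: "\<And>x. x \<in> Sp G p \<Longrightarrow> x \<subseteq> rr G p x" by (rule rr_ge)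
  have mono: "\<And>x y. x \<in> Sp G p \<Longrightarrow> y \<in> Sp G p \<Longrightarrow> x \<subseteq> y \<Longrightarrow> rr G p x \<subseteq> rr G p y"
    by (rule rr_mono)
  have fixA: "\<And>a. a \<in> Bp G p \<Longrightarrow> rr G p a = a" by (rule Bp_fix)
  have 1: "strong_deformation_retract (down_topology (Sp G p)) (Bp G p)"
    unfolding strong_deformation_retract_def by (rule sdr_closure[OF AS rA ext mono fixA]) auto
  have 2: "equivariant_sdr G (down_topology (Sp G p)) (Bp G p)"
    unfolding equivariant_sdr_def topspace_down
    by (rule sdr_closure[OF AS rA ext mono fixA]) (auto simp: rr_conj)
  show ?thesis using 1 2 by blast
qed

end
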